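(* Let $p\ge 5$ be a prime and $k$ an integer with $1\le k\le \frac{p-3}{2}$, and put $t=p-1-2k$. Then, modulo $p$, \[ (-1)^k 4^{2k-1} E_t \equiv 4^t S_t(0, \tfrac{1}{16}) + 2^t S_t(\tfrac{3}{8}, \tfrac{7}{16}) + (2^t + 4^t) S_t(\tfrac{7}{16}, \tfrac{1}{2}). \]
   Context: $E_n$ denotes the $n$th Euler number, defined by $\sec z=\sum_{n\ge0}E_n\frac{z^n}{n!}$ (so $E_2=1$, $E_4=5$). For a prime $p$, an integer $\ell$ and real numbers $0\le x<y\le 1$, $S_\ell(x,y)=\sum_{xp<s<yp} s^\ell$, the sum over integers $s$ strictly between $xp$ and $yp$. Congruences between rational numbers modulo $p$ mean that the difference has $p$-adic valuation at least $1$. *)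

theory Defs
  imports "HOL-Computational_Algebra.Formal_Power_Series"
begin

definition euler_num :: "nat \<Rightarrow> rat" where
  "euler_num n = fact n * fps_nth (inverse (fps_cos (1::rat))) n"

definition S_sum :: "nat \<Rightarrow> nat \<Rightarrow> rat \<Rightarrow> rat \<Rightarrow> rat" where
  "S_sum p l x y = (\<Sum>s\<in>{s::int. x * of_nat p < of_int s \<and> of_int s < y * of_nat p}. (of_int s) ^ l)"

text \<open>Congruence of rationals mod p: the difference has p-adic valuation at least 1
  (numerator of the reduced fraction divisible by p; covers difference 0).\<close>
definition rat_cong :: "rat \<Rightarrow> rat \<Rightarrow> nat \<Rightarrow> bool" where
  "rat_cong a b p = (int p dvd fst (quotient_of (a - b)))"

end

theory Submission
  imports Defs "HOL-Number_Theory.Number_Theory"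
begin

lemma cos_sec_coeff:
  "(\<Sum>i=0..n. fps_nth (fps_cos (1::rat)) i * (euler_num (n-i) / fact (n-i))) = (if n = 0 then 1 else 0)"
proof -
  have "fps_cos (1::rat) * inverse (fps_cos 1) = 1" by (rule inverse_mult_eq_1') simp
  hence "fps_nth (fps_cos 1 * inverse (fps_cos (1::rat))) n = fps_nth (1::rat fps) n" by simp
  thus ?thesis by (simp add: fps_mult_nth euler_num_def)
qed

definition sech_num :: "nat \<Rightarrow> rat" where
  "sech_num n = (if even n then (-1)^(n div 2) * euler_num n else 0)"

definition SD :: "rat fps" where "SD = Abs_fps (\<lambda>n. sech_num n / fact n)"

lemma sign_split:
  assumes "even n" "even i" "i \<le> n"
  shows "((-1::rat)^((n-i) div 2)) = (-1)^(n div 2) * (-1)^(i div 2)"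
proof -
  obtain a b where a: "n = 2*a" "i = 2*b" using assms by (auto elim!: evenE)
  with assms have "b \<le> a" by simp
  then have "(-1::rat)^a = (-1)^(a-b) * (-1)^b" by (metis le_add_diff_inverse2 power_add)
  hence "(-1::rat)^a * (-1)^b = (-1)^(a-b) * ((-1)^b * (-1)^b)" by simp
  also have "(-1::rat)^b * (-1)^b = 1" by (simp add: power_add[symmetric])
  finally show ?thesis using a by (simp add: diff_mult_distrib2[symmetric])
qed

lemma cosh_SD: "(fps_exp 1 + fps_exp (-1)) * SD = 2"
proof (rule fps_ext)
  fix n
  have pw: "(1 / fact i + (-1)^i / fact i) * (sech_num (n-i) / fact (n-i))
        = 2 * (if even n then (-1)^(n div 2) else 0) * (fps_nth (fps_cos (1::rat)) i * (euler_num (n-i) / fact (n-i)))"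
    if "i \<in> {0..n}" for i
  proof (cases "even i")
    case True
    show ?thesis
    proof (cases "even n")
      case True
      with \<open>even i\<close> that show ?thesis
        by (simp add: sech_num_def fps_cos_def sign_split field_simps)
    next
      case False
      with \<open>even i\<close> that have "odd (n-i)" by auto
      with False show ?thesis by (simp add: sech_num_def)
    qed
  next
    case False
    then show ?thesis by (simp add: fps_cos_def)
  qed
  have "fps_nth ((fps_exp 1 + fps_exp (-1)) * SD) n
      = (\<Sum>i=0..n. (1 / fact i + (-1)^i / fact i) * (sech_num (n-i) / fact (n-i)))"
    by (simp add: fps_mult_nth SD_def)
  also have "\<dots> = (\<Sum>i=0..n. 2 * (if even n then (-1)^(n div 2) else 0) * (fps_nth (fps_cos (1::rat)) i * (euler_num (n-i) / fact (n-i))))"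
    using pw by (rule sum.cong[OF refl])
  also have "\<dots> = 2 * (if even n then (-1)^(n div 2) else 0) * (if n = 0 then 1 else 0)"
    by (simp only: sum_distrib_left[symmetric] cos_sec_coeff)
  also have "\<dots> = fps_nth (2::rat fps) n" by (simp add: fps_numeral_nth)
  finally show "fps_nth ((fps_exp 1 + fps_exp (-1)) * SD) n = fps_nth (2::rat fps) n" .
qed

lemma sech_rec:
  assumes "n > 0"
  shows "(\<Sum>i=0..n. (if even i then of_nat (n choose i) else 0) * sech_num (n-i)) = 0"
proof -
  have "fps_nth ((fps_exp 1 + fps_exp (-1)) * SD) n = 0" using assms by (simp add: cosh_SD fps_numeral_nth)
  hence "(\<Sum>i=0..n. (1 / fact i + (-1)^i / fact i) * (sech_num (n-i) / fact (n-i))) = (0::rat)"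
    by (simp add: fps_mult_nth SD_def)
  hence "fact n / 2 * (\<Sum>i=0..n. (1 / fact i + (-1)^i / fact i) * (sech_num (n-i) / fact (n-i))) = (0::rat)"
    by simp
  hence "(\<Sum>i=0..n. fact n / 2 * ((1 / fact i + (-1)^i / fact i) * (sech_num (n-i) / fact (n-i)))) = (0::rat)"
    by (simp add: sum_distrib_left)
  moreover have "fact n / 2 * ((1 / fact i + (-1)^i / fact i) * (sech_num (n-i) / fact (n-i)))
      = (if even i then of_nat (n choose i) else 0) * sech_num (n-i)" if "i \<in> {0..n}" for i
  proof (cases "even i")
    case True
    with that show ?thesis by (simp add: binomial_fact field_simps)
  next
    case False
    then show ?thesis by simp
  qed
  ultimately show ?thesis by (metis (no_types, lifting) sum.cong)
qed

lemma sech_Ints: "sech_num n \<in> \<int>"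
proof (induction n rule: less_induct)
  case (less n)
  show ?case
  proof (cases "n = 0")
    case True
    then show ?thesis by (simp add: sech_num_def euler_num_def fps_inverse_def)
  next
    case False
    have "(\<Sum>i=0..n. (if even i then of_nat (n choose i) else 0) * sech_num (n-i)) = 0"
      using False by (intro sech_rec) simp
    moreover have "(\<Sum>i=0..n. (if even i then of_nat (n choose i) else 0) * sech_num (n-i))
       = sech_num n + (\<Sum>i=Suc 0..n. (if even i then of_nat (n choose i) else 0) * sech_num (n-i))"
      by (simp add: sum.atLeast_Suc_atMost)
    ultimately have "sech_num n = - (\<Sum>i=Suc 0..n. (if even i then of_nat (n choose i) else 0) * sech_num (n-i))"
      by (simp add: eq_neg_iff_add_eq_0)
    also have "\<dots> \<in> \<int>"
      using less False by (intro Ints_minus Ints_sum Ints_mult) auto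
    finally show ?thesis .
  qed
qed

lemma tele_aux: "1 - D * a + D * (b + a) = 1 - (- D) * (b::rat fps)"
  by (simp add: algebra_simps)

lemma telescope:
  "(\<Sum>b<N. fps_const ((-1)^b) * fps_exp (of_nat (2*b+1) :: rat)) * (fps_exp 1 + fps_exp (-1))
     = 1 - fps_const ((-1)^N) * fps_exp (of_nat (2*N))"
proof (induction N)
  case 0
  then show ?case by simp
next
  case (Suc N)
  have e1: "fps_exp (of_nat (2*N+1) :: rat) * fps_exp 1 = fps_exp (of_nat (2*Suc N))"
    by (simp add: fps_exp_add_mult[symmetric])
  have e2: "fps_exp (of_nat (2*N+1) :: rat) * fps_exp (-1) = fps_exp (of_nat (2*N))"
    by (simp add: fps_exp_add_mult[symmetric])
  have "(\<Sum>b<Suc N. fps_const ((-1)^b) * fps_exp (of_nat (2*b+1) :: rat)) * (fps_exp 1 + fps_exp (-1))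
      = (\<Sum>b<N. fps_const ((-1)^b) * fps_exp (of_nat (2*b+1) :: rat)) * (fps_exp 1 + fps_exp (-1))
        + fps_const ((-1)^N) * (fps_exp (of_nat (2*N+1) :: rat) * fps_exp 1 + fps_exp (of_nat (2*N+1) :: rat) * fps_exp (-1))"
    by (simp add: algebra_simps)
  also have "\<dots> = 1 - fps_const ((-1)^N) * fps_exp (of_nat (2*N)) + fps_const ((-1)^N) * (fps_exp (of_nat (2*Suc N)) + fps_exp (of_nat (2*N)))"
    by (simp only: Suc.IH e1 e2)
  also have "\<dots> = 1 - fps_const ((-1::rat)^(Suc N)) * fps_exp (of_nat (2*Suc N))"
    using tele_aux[of "fps_const ((-1::rat)^N)" "fps_exp (of_nat (2*N))" "fps_exp (of_nat (2*Suc N))"]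
    by simp
  finally show ?case .
qed

lemma G_identity:
  "2 * (\<Sum>b<2*M. (-1)^b * of_nat (2*b+1)^n) =
     sech_num n - (\<Sum>i=0..n. of_nat (n choose i) * (of_nat (4*M))^i * sech_num (n-i) :: rat)"
proof -
  define A where "A = (\<Sum>b<2*M. fps_const ((-1)^b) * fps_exp (of_nat (2*b+1) :: rat))"
  have "A * (fps_exp 1 + fps_exp (-1)) = 1 - fps_exp (of_nat (4*M))"
    using telescope[of "2*M"] by (simp add: A_def)
  hence "(A + A) = (1 - fps_exp (of_nat (4*M))) * SD"
    using cosh_SD by (metis (no_types, lifting) mult.assoc mult_2_right)
  hence "fps_nth (A + A) n = fps_nth ((1 - fps_exp (of_nat (4*M))) * SD) n" by simp
  moreover have "fps_nth (A + A) n = 2 * (\<Sum>b<2*M. (-1)^b * of_nat (2*b+1)^n / fact n)"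
  proof -
    have "fps_nth A n = (\<Sum>b<2*M. (-1)^b * of_nat (2*b+1)^n / fact n)"
      unfolding A_def fps_sum_nth by simp
    then show ?thesis by (simp only: fps_add_nth)
  qed
  moreover have "fps_nth ((1 - fps_exp (of_nat (4*M))) * SD) n =
     sech_num n / fact n - (\<Sum>i=0..n. (of_nat (4*M))^i / fact i * (sech_num (n-i) / fact (n-i)) :: rat)"
  proof -
    have "fps_nth ((1 - fps_exp (of_nat (4*M))) * SD) n = fps_nth (SD - fps_exp (of_nat (4*M)) * SD) n"
      by (simp only: left_diff_distrib mult_1_left)
    also have "\<dots> = fps_nth SD n - fps_nth (fps_exp (of_nat (4*M)) * SD) n"
      by (rule fps_sub_nth)
    also have "\<dots> = sech_num n / fact n - (\<Sum>i=0..n. (of_nat (4*M))^i / fact i * (sech_num (n-i) / fact (n-i)) :: rat)"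
      by (simp only: fps_mult_nth SD_def fps_nth_Abs_fps fps_exp_nth of_nat_fact)
    finally show ?thesis .
  qed
  ultimately have "2 * (\<Sum>b<2*M. (-1)^b * of_nat (2*b+1)^n / fact n) =
     sech_num n / fact n - (\<Sum>i=0..n. (of_nat (4*M))^i / fact i * (sech_num (n-i) / fact (n-i)) :: rat)"
    by simp
  hence "fact n * (2 * (\<Sum>b<2*M. (-1)^b * of_nat (2*b+1)^n / fact n)) =
     fact n * (sech_num n / fact n - (\<Sum>i=0..n. (of_nat (4*M))^i / fact i * (sech_num (n-i) / fact (n-i)) :: rat))"
    by simp
  hence "2 * (\<Sum>b<2*M. (-1)^b * of_nat (2*b+1)^n) =
     sech_num n - (\<Sum>i=0..n. fact n * ((of_nat (4*M))^i / fact i * (sech_num (n-i) / fact (n-i))) :: rat)"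
    by (simp add: right_diff_distrib sum_divide_distrib[symmetric]) (simp add: sum_distrib_left)
  moreover have "fact n * ((of_nat (4*M))^i / fact i * (sech_num (n-i) / fact (n-i))) =
      of_nat (n choose i) * (of_nat (4*M))^i * sech_num (n-i)" if "i \<in> {0..n}" for i :: nat
    using that by (simp add: binomial_fact field_simps)
  ultimately show ?thesis by (metis (no_types, lifting) sum.cong)
qed

definition si :: "nat \<Rightarrow> int" where "si n = \<lfloor>sech_num n\<rfloor>"

lemma sech_si: "sech_num n = of_int (si n)"
  using sech_Ints[of n] unfolding si_def by (metis Ints_cases floor_of_int)

lemma G_int:
  "2 * (\<Sum>b<2*M. (-1)^b * int (2*b+1)^n) =
     si n - (\<Sum>i=0..n. int (n choose i) * int (4*M)^i * si (n-i))"
proof -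
  have "rat_of_int (2 * (\<Sum>b<2*M. (-1)^b * int (2*b+1)^n)) =
        rat_of_int (si n - (\<Sum>i=0..n. int (n choose i) * int (4*M)^i * si (n-i)))"
    using G_identity[where M=M and n=n] by (simp add: sech_si)
  then show ?thesis by (simp only: of_int_eq_iff)
qed

definition chi :: "int \<Rightarrow> int" where
  "chi a = (if a mod 4 = 1 then 1 else if a mod 4 = 3 then -1 else 0)"

lemma chi_2p: "odd P \<Longrightarrow> chi (x + 2*P) = - chi x"
  unfolding chi_def by presburger

lemma chi_odd: "chi (2 * int b + 1) = (-1)^b"
proof (cases "even b")
  case True
  then obtain c where "b = 2*c" by blast
  then show ?thesis unfolding chi_def by (simp; presburger)
next
  case False
  then obtain c where "b = 2*c+1" using oddE by blast
  then show ?thesis unfolding chi_def by (simp; presburger)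
qed

lemma chi_even: "chi (2 * int b) = 0"
  unfolding chi_def by presburger

lemma binom_first:
  fixes x y :: int
  shows "\<exists>K. (x + y)^n = x^n + of_nat n * y * x^(n-1) + y^2 * K"
proof (induction n)
  case 0
  then show ?case by (intro exI[of _ 0]) simp
next
  case (Suc n)
  then obtain K where K: "(x + y)^n = x^n + of_nat n * y * x^(n-1) + y^2 * K" by blast
  show ?case
  proof (cases n)
    case 0
    then show ?thesis by (intro exI[of _ 0]) simp
  next
    case (Suc m)
    have "(x + y)^(Suc n) = (x + y) * (x^n + of_nat n * y * x^(n-1) + y^2 * K)" using K by simp
    also have "\<dots> = x^(Suc n) + of_nat (Suc n) * y * x^(Suc n - 1) + y^2 * (of_nat n * x^(n-1) + K * (x + y))"
      using Suc by (simp add: algebra_simps power2_eq_square)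
    finally show ?thesis by blast
  qed
qed

lemma sum_lessThan_add: fixes g :: "nat \<Rightarrow> 'a::comm_monoid_add" shows "(\<Sum>a<m+k. g a) = (\<Sum>a<m. g a) + (\<Sum>r<k. g (m + r))"
  by (induction k) (simp_all add: add_ac)

lemma sum_lessThan_double: fixes g :: "nat \<Rightarrow> 'a::comm_monoid_add" shows "(\<Sum>a<2*N. g a) = (\<Sum>b<N. g (2*b) + g (2*b+1))"
  by (induction N) (simp_all add: add_ac)

lemma G_chi: "(\<Sum>b<2*M. (-1)^b * int (2*b+1)^n) = (\<Sum>a<4*M. chi (int a) * int a ^ n)"
proof -
  have "(\<Sum>a<4*M. chi (int a) * int a ^ n) = (\<Sum>a<2*(2*M). chi (int a) * int a ^ n)" by simp
  also have "\<dots> = (\<Sum>b<2*M. chi (int (2*b)) * int (2*b) ^ n + chi (int (2*b+1)) * int (2*b+1) ^ n)"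
    by (rule sum_lessThan_double)
  also have "\<dots> = (\<Sum>b<2*M. (-1)^b * int (2*b+1)^n)"
  proof (rule sum.cong[OF refl])
    fix b assume "b \<in> {..<2*M}"
    have "chi (int (2*b)) = 0" using chi_even[of b] by simp
    moreover have "chi (int (2*b+1)) = (-1)^b" using chi_odd[of b] by (simp add: add.commute)
    ultimately show "chi (int (2*b)) * int (2*b) ^ n + chi (int (2*b+1)) * int (2*b+1) ^ n = (-1)^b * int (2*b+1)^n"
      by simp
  qed
  finally show ?thesis by simp
qed

lemma block_pt:
  fixes x P :: int
  assumes "odd P"
  shows "(P^2) dvd (chi x * x^n + chi (x + P) * (x + P)^n + chi (x + 2*P) * (x + 2*P)^n
           + chi (x + 3*P) * (x + 3*P)^n + 2 * int n * P * ((chi x + chi (x + P)) * x^(n-1)))"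
proof -
  obtain K1 where K1: "(x + 2*P)^n = x^n + of_nat n * (2*P) * x^(n-1) + (2*P)^2 * K1"
    using binom_first by blast
  obtain K2 where K2: "(x + P)^n = x^n + of_nat n * P * x^(n-1) + P^2 * K2"
    using binom_first by blast
  obtain K3 where K3: "(x + 3*P)^n = x^n + of_nat n * (3*P) * x^(n-1) + (3*P)^2 * K3"
    using binom_first by blast
  have c2: "chi (x + 2*P) = - chi x" using chi_2p[OF assms] by simp
  have c3: "chi (x + 3*P) = - chi (x + P)" using chi_2p[OF assms, of "x + P"] by (simp add: add_ac)
  have "chi x * x^n + chi (x + P) * (x + P)^n + chi (x + 2*P) * (x + 2*P)^n
           + chi (x + 3*P) * (x + 3*P)^n + 2 * int n * P * ((chi x + chi (x + P)) * x^(n-1))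
      = P^2 * (chi (x + P) * (K2 - 9 * K3) - 4 * chi x * K1)"
    unfolding c2 c3 K1 K2 K3 by (simp add: algebra_simps power2_eq_square)
  then show ?thesis by simp
qed

lemma L6:
  assumes "odd p"
  shows "(int p)^2 dvd (\<Sum>a<4*p. chi (int a) * int a ^ n)
           + 2 * int n * int p * (\<Sum>r<p. (chi (int r) + chi (int r + int p)) * int r ^ (n-1))"
proof -
  define g where "g a = chi (int a) * int a ^ n" for a
  have "4*p = p+p+p+p" by simp
  hence "(\<Sum>a<4*p. g a) = (\<Sum>a<p+p+p+p. g a)" by (simp only:)
  also have "\<dots> = (\<Sum>r<p. g r) + (\<Sum>r<p. g (p+r)) + (\<Sum>r<p. g (p+p+r)) + (\<Sum>r<p. g (p+p+p+r))"
    by (simp only: sum_lessThan_add)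
  finally have split: "(\<Sum>a<4*p. g a) = (\<Sum>r<p. g r + g (p+r) + g (p+p+r) + g (p+p+p+r))"
    by (simp add: sum.distrib)
  have "(\<Sum>a<4*p. g a) + 2 * int n * int p * (\<Sum>r<p. (chi (int r) + chi (int r + int p)) * int r ^ (n-1))
     = (\<Sum>r<p. g r + g (p+r) + g (p+p+r) + g (p+p+p+r) + 2 * int n * int p * ((chi (int r) + chi (int r + int p)) * int r ^ (n-1)))"
    unfolding split by (simp add: sum.distrib sum_distrib_left)
  also have "(int p)^2 dvd \<dots>"
  proof (rule dvd_sum)
    fix r assume "r \<in> {..<p}"
    have "odd (int p)" using assms by simp
    from block_pt[OF this, of "int r" n]
    show "(int p)^2 dvd g r + g (p+r) + g (p+p+r) + g (p+p+p+r) + 2 * int n * int p * ((chi (int r) + chi (int r + int p)) * int r ^ (n-1))"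
      unfolding g_def by (simp add: algebra_simps)
  qed
  finally show ?thesis unfolding g_def .
qed

lemma sum_0_1_rest:
  fixes f :: "nat \<Rightarrow> int"
  assumes "1 \<le> n"
  shows "(\<Sum>i=0..n. f i) = f 0 + f 1 + (\<Sum>i=2..n. f i)"
proof -
  have "(\<Sum>i=0..n. f i) = f 0 + (\<Sum>i=Suc 0..n. f i)" by (simp add: sum.atLeast_Suc_atMost)
  also have "(\<Sum>i=Suc 0..n. f i) = f 1 + (\<Sum>i=Suc (Suc 0)..n. f i)"
    using assms by (simp add: sum.atLeast_Suc_atMost)
  finally show ?thesis by (simp add: numeral_2_eq_2)
qed

lemma key_cong:
  assumes "prime p" "odd p" "p \<ge> 5" "1 \<le> n" "n < p"
  shows "int p dvd si (n-1) - (\<Sum>r<p. (chi (int r) + chi (int r + int p)) * int r ^ (n-1))"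
proof -
  define X where "X = (\<Sum>r<p. (chi (int r) + chi (int r + int p)) * int r ^ (n-1))"
  define G where "G = (\<Sum>b<2*p. (-1)^b * int (2*b+1)^n)"
  define f where "f i = int (n choose i) * int (4*p)^i * si (n-i)" for i
  have GI: "2 * G = si n - (\<Sum>i=0..n. f i)" unfolding G_def f_def by (rule G_int)
  have rest: "(int p)^2 dvd (\<Sum>i=2..n. f i)"
  proof (rule dvd_sum)
    fix i assume "i \<in> {2..n}"
    hence "(int (4*p))^2 dvd int (4*p)^i" by (intro le_imp_power_dvd) simp
    moreover have "(int p)^2 dvd (int (4*p))^2" by (simp add: power_mult_distrib)
    ultimately have "(int p)^2 dvd int (4*p)^i" by (rule dvd_trans[rotated])
    then show "(int p)^2 dvd f i" unfolding f_def by simp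
  qed
  have "(\<Sum>i=0..n. f i) = f 0 + f 1 + (\<Sum>i=2..n. f i)" using assms(4) by (rule sum_0_1_rest)
  moreover have "f 0 = si n" by (simp add: f_def)
  moreover have "f 1 = int n * (4 * int p) * si (n-1)" by (simp add: f_def)
  ultimately have "2 * G + 4 * int n * int p * si (n-1) = - (\<Sum>i=2..n. f i)" using GI by simp
  hence A1: "(int p)^2 dvd 2 * G + 4 * int n * int p * si (n-1)" using rest by simp
  have A2: "(int p)^2 dvd G + 2 * int n * int p * X"
    using L6[OF assms(2), of n] G_chi[where M=p and n=n] unfolding G_def X_def by simp
  have "(int p)^2 dvd (2 * G + 4 * int n * int p * si (n-1)) - 2 * (G + 2 * int n * int p * X)"
    using A1 A2 by (intro dvd_diff dvd_mult) auto
  moreover have "(2 * G + 4 * int n * int p * si (n-1)) - 2 * (G + 2 * int n * int p * X)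
     = int p * (int p * 0 + 4 * int n * (si (n-1) - X))" by (simp add: algebra_simps)
  ultimately have "int p * int p dvd int p * (4 * int n * (si (n-1) - X))" by (simp add: power2_eq_square)
  hence d: "int p dvd 4 * int n * (si (n-1) - X)" using assms(1) by (subst (asm) dvd_mult_cancel_left) auto
  have pr: "prime (int p)" using assms(1) by simp
  have n4: "\<not> int p dvd 4"
  proof
    assume "int p dvd 4"
    hence "int p \<le> 4" by (rule zdvd_imp_le) simp
    with assms(3) show False by simp
  qed
  have nn: "\<not> int p dvd int n"
  proof
    assume "int p dvd int n"
    hence "int p \<le> int n" by (rule zdvd_imp_le) (use assms(4) in simp)
    with assms(5) show False by simp
  qed
  from d pr n4 nn show ?thesis unfolding X_def by (simp add: prime_dvd_mult_iff)
qed


lemma power_sum_zero: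
  assumes "prime p" "0 < t" "t < p - 1"
  shows "int p dvd (\<Sum>r\<in>{0<..<int p}. r^t)"
proof -
  obtain g0 where "residue_primroot p g0"
    using prime_primitive_root_exists[OF prime_gt_1_nat[OF assms(1)] assms(1)] by blast
  hence cop: "coprime p g0" and ordg: "ord p g0 = p - 1"
    using assms(1) by (auto simp: residue_primroot_def totient_prime)
  define P where "P = int p"
  define g where "g = int g0"
  define R where "R = {0<..<P}"
  define h where "h r = (g * r) mod P" for r
  have p1: "p > 1" using assms(1) prime_gt_1_nat by blast
  have prP: "prime P" using assms(1) by (simp add: P_def)
  have copg: "coprime g P" using cop by (simp add: g_def P_def coprime_commute)
  have ngP: "\<not> P dvd g"
  proof
    assume "P dvd g"
    hence "p dvd g0" by (simp add: P_def g_def)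
    with cop have "is_unit p" by (intro coprime_common_divisor[OF cop dvd_refl])
    with p1 show False by simp
  qed
  have hR: "h ` R \<subseteq> R"
  proof
    fix y assume "y \<in> h ` R"
    then obtain r where r: "r \<in> R" "y = h r" by blast
    have "0 \<le> h r" "h r < P" using p1 by (auto simp: h_def P_def)
    moreover have "h r \<noteq> 0"
    proof
      assume "h r = 0"
      hence "P dvd g * r" by (simp add: h_def mod_eq_0_iff_dvd)
      hence "P dvd r" using prP ngP by (simp add: prime_dvd_mult_iff)
      with r(1) show False unfolding R_def by (auto dest: zdvd_imp_le)
    qed
    ultimately show "y \<in> R" using r by (simp add: R_def)
  qed
  have inj: "inj_on h R"
  proof
    fix r1 r2 assume r: "r1 \<in> R" "r2 \<in> R" "h r1 = h r2"
    hence "[g * r1 = g * r2] (mod P)" by (simp add: h_def cong_def)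
    hence "[r1 = r2] (mod P)" using copg by (simp add: cong_mult_lcancel)
    thus "r1 = r2" using r(1,2) by (intro cong_less_imp_eq_int[of r1 P r2]) (auto simp: R_def)
  qed
  have img: "h ` R = R" using endo_inj_surj[OF _ hR inj] by (simp add: R_def)
  define T where "T = (\<Sum>r\<in>R. r^t)"
  have "T = (\<Sum>r\<in>h ` R. r^t)" unfolding T_def img ..
  also have "\<dots> = (\<Sum>r\<in>R. (h r)^t)" using inj by (simp add: sum.reindex)
  finally have T1: "T = (\<Sum>r\<in>R. (h r)^t)" .
  have "[(\<Sum>r\<in>R. (h r)^t) = (\<Sum>r\<in>R. g^t * r^t)] (mod P)"
  proof (rule cong_sum)
    fix r assume "r \<in> R"
    have "[h r = g * r] (mod P)" by (simp add: h_def)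
    hence "[(h r)^t = (g * r)^t] (mod P)" by (rule cong_pow)
    thus "[(h r)^t = g^t * r^t] (mod P)" by (simp add: power_mult_distrib)
  qed
  moreover have "(\<Sum>r\<in>R. g^t * r^t) = g^t * T" by (simp add: T_def sum_distrib_left)
  ultimately have "[T = g^t * T] (mod P)" unfolding T1[symmetric] by simp
  hence "P dvd T - g^t * T" by (simp only: cong_iff_dvd_diff)
  hence "P dvd - (T - g^t * T)" by (simp only: dvd_minus_iff)
  moreover have "- (T - g^t * T) = (g^t - 1) * T" by (simp add: algebra_simps)
  ultimately have "P dvd (g^t - 1) * T" by simp
  moreover have "\<not> P dvd g^t - 1"
  proof
    assume "P dvd g^t - 1"
    hence "[g^t = 1] (mod P)" by (simp add: cong_iff_dvd_diff)
    hence "[int (g0^t) = int 1] (mod int p)" by (simp add: g_def P_def)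
    hence "[g0^t = 1] (mod p)" by (simp only: cong_int_iff)
    moreover have "\<not> [g0^t = 1] (mod p)" using assms(2,3) ordg by (intro ord_minimal) auto
    ultimately show False by simp
  qed
  ultimately have "P dvd T" using prP by (simp add: prime_dvd_mult_iff)
  thus ?thesis by (simp add: T_def P_def R_def)
qed

definition Fs :: "int \<Rightarrow> nat \<Rightarrow> (int \<Rightarrow> bool) \<Rightarrow> int" where
  "Fs P t Pr = (\<Sum>r\<in>{0<..<P}. if Pr r then r^t else 0)"

lemma F_refl:
  assumes "even t" "\<And>r. Pr (P - r) \<longleftrightarrow> Pr' r"
  shows "[Fs P t Pr = Fs P t Pr'] (mod P)"
proof -
  have "Fs P t Pr = (\<Sum>r\<in>{0<..<P}. if Pr (P - r) then (P - r)^t else 0)"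
    unfolding Fs_def
    by (rule sum.reindex_bij_witness[of _ "\<lambda>r. P - r" "\<lambda>r. P - r"]) auto
  also have "[\<dots> = (\<Sum>r\<in>{0<..<P}. if Pr' r then r^t else 0)] (mod P)"
  proof (rule cong_sum)
    fix r assume "r \<in> {0<..<P}"
    have "[P - r = - r] (mod P)" by (simp add: cong_iff_dvd_diff)
    hence "[(P - r)^t = (- r)^t] (mod P)" by (rule cong_pow)
    hence "[(P - r)^t = r^t] (mod P)" using assms(1) by simp
    thus "[(if Pr (P - r) then (P - r)^t else 0) = (if Pr' r then r^t else 0)] (mod P)"
      using assms(2) by simp
  qed
  finally show ?thesis unfolding Fs_def .
qed

lemma F_split4:
  "(\<Sum>r\<in>{0<..<P}. r^t) = Fs P t (\<lambda>r. r mod 4 = 0) + Fs P t (\<lambda>r. r mod 4 = 1)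
      + Fs P t (\<lambda>r. r mod 4 = 2) + Fs P t (\<lambda>r. r mod 4 = 3)"
proof -
  have "r^t = (if r mod 4 = 0 then r^t else 0) + (if r mod 4 = 1 then r^t else 0)
      + (if r mod 4 = 2 then r^t else 0) + (if r mod 4 = 3 then r^t else 0)" for r :: int
  proof -
    have "r mod 4 = 0 \<or> r mod 4 = 1 \<or> r mod 4 = 2 \<or> r mod 4 = 3" by presburger
    thus ?thesis by auto
  qed
  hence "(\<Sum>r\<in>{0<..<P}. r^t) = (\<Sum>r\<in>{0<..<P}. (if r mod 4 = 0 then r^t else 0) + (if r mod 4 = 1 then r^t else 0)
      + (if r mod 4 = 2 then r^t else 0) + (if r mod 4 = 3 then r^t else 0))" by (intro sum.cong) auto
  thus ?thesis unfolding Fs_def by (simp add: sum.distrib)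
qed

lemma chi_sum_1: "P mod 4 = 1 \<Longrightarrow> chi r + chi (r + P) =
   (if r mod 4 = 0 then 1 else 0) + (if r mod 4 = 1 then 1 else 0) - (if r mod 4 = 2 then 1 else 0) - (if r mod 4 = 3 then 1 else 0)"
  unfolding chi_def by presburger

lemma chi_sum_3: "P mod 4 = 3 \<Longrightarrow> chi r + chi (r + P) =
   - (if r mod 4 = 0 then 1 else 0) + (if r mod 4 = 1 then 1 else 0) + (if r mod 4 = 2 then 1 else 0) - (if r mod 4 = 3 then 1 else 0)"
  unfolding chi_def by presburger

lemma X_int:
  assumes "0 < t"
  shows "(\<Sum>r<p. (chi (int r) + chi (int r + int p)) * int r ^ t)
       = (\<Sum>r\<in>{0<..<int p}. (chi r + chi (r + int p)) * r ^ t)"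
proof -
  have "(\<Sum>r<p. (chi (int r) + chi (int r + int p)) * int r ^ t)
       = (\<Sum>r\<in>int ` {0..<p}. (chi r + chi (r + int p)) * r ^ t)"
    by (simp add: sum.reindex lessThan_atLeast0)
  also have "int ` {0..<p} = {0..<int p}" by (simp add: image_int_atLeastLessThan)
  also have "(\<Sum>r\<in>{0..<int p}. (chi r + chi (r + int p)) * r ^ t) = (\<Sum>r\<in>{0<..<int p}. (chi r + chi (r + int p)) * r ^ t)"
  proof (cases "p = 0")
    case False
    hence "{0..<int p} = insert 0 {0<..<int p}" by auto
    thus ?thesis using assms by simp
  qed simp
  finally show ?thesis .
qed

lemma L7:
  assumes "prime p" "p \<ge> 5" "0 < t" "t < p - 1" "even t"
  shows "int p dvd (\<Sum>r<p. (chi (int r) + chi (int r + int p)) * int r ^ t)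
           - 4 * (if p mod 4 = 1 then 1 else -1) * Fs (int p) t (\<lambda>r. r mod 4 = int p mod 4)"
proof -
  define P where "P = int p"
  define F where "F c = Fs P t (\<lambda>r. r mod 4 = c)" for c
  have odd: "odd p" using assms(1,2) by (intro prime_odd_nat) auto
  have comp: "P dvd F 0 + F 1 + F 2 + F 3"
    using power_sum_zero[OF assms(1,3,4)] F_split4[where P=P and t=t] by (simp add: F_def P_def)
  have X: "(\<Sum>r<p. (chi (int r) + chi (int r + int p)) * int r ^ t) = (\<Sum>r\<in>{0<..<P}. (chi r + chi (r + P)) * r ^ t)"
    using X_int[OF assms(3)] by (simp add: P_def)
  have "p mod 4 = 1 \<or> p mod 4 = 3" using odd by presburger
  then show ?thesis
  proof
    assume p1: "p mod 4 = 1"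
    hence P1: "P mod 4 = 1" unfolding P_def by presburger
    have "(\<Sum>r\<in>{0<..<P}. (chi r + chi (r + P)) * r ^ t) = (\<Sum>r\<in>{0<..<P}.
         (if r mod 4 = 0 then r^t else 0) + (if r mod 4 = 1 then r^t else 0) - (if r mod 4 = 2 then r^t else 0) - (if r mod 4 = 3 then r^t else 0))"
      by (intro sum.cong refl) (simp add: chi_sum_1[OF P1] algebra_simps)
    also have "\<dots> = F 0 + F 1 - F 2 - F 3" by (simp add: F_def Fs_def sum.distrib sum_subtractf)
    finally have XF: "(\<Sum>r\<in>{0<..<P}. (chi r + chi (r + P)) * r ^ t) = F 0 + F 1 - F 2 - F 3" .
    have r01: "[F 0 = F 1] (mod P)" unfolding F_def by (rule F_refl[OF assms(5)]) (use P1 in presburger)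
    have r23: "[F 2 = F 3] (mod P)" unfolding F_def by (rule F_refl[OF assms(5)]) (use P1 in presburger)
    have "P dvd (F 0 - F 1) * 2 - (F 0 + F 1 + F 2 + F 3)"
      using dvd_diff[OF dvd_mult2[OF r01[unfolded cong_iff_dvd_diff]] comp] .
    moreover have "(\<Sum>r<p. (chi (int r) + chi (int r + int p)) * int r ^ t)
           - 4 * (if p mod 4 = 1 then 1 else -1) * Fs (int p) t (\<lambda>r. r mod 4 = int p mod 4)
         = (F 0 - F 1) * 2 - (F 0 + F 1 + F 2 + F 3)"
    proof -
      have "Fs (int p) t (\<lambda>r. r mod 4 = int p mod 4) = F 1" using P1 by (simp add: F_def P_def)
      then show ?thesis using X XF p1 by simp
    qed
    ultimately show ?thesis by (simp add: P_def)
  next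
    assume p3: "p mod 4 = 3"
    hence P3: "P mod 4 = 3" unfolding P_def by presburger
    have "(\<Sum>r\<in>{0<..<P}. (chi r + chi (r + P)) * r ^ t) = (\<Sum>r\<in>{0<..<P}.
         - (if r mod 4 = 0 then r^t else 0) + (if r mod 4 = 1 then r^t else 0) + (if r mod 4 = 2 then r^t else 0) - (if r mod 4 = 3 then r^t else 0))"
      by (intro sum.cong refl) (simp add: chi_sum_3[OF P3] algebra_simps)
    also have "\<dots> = - F 0 + F 1 + F 2 - F 3" by (simp add: F_def Fs_def sum.distrib sum_subtractf sum_negf)
    finally have XF: "(\<Sum>r\<in>{0<..<P}. (chi r + chi (r + P)) * r ^ t) = - F 0 + F 1 + F 2 - F 3" .
    have r03: "[F 0 = F 3] (mod P)" unfolding F_def by (rule F_refl[OF assms(5)]) (use P3 in presburger)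
    have r12: "[F 1 = F 2] (mod P)" unfolding F_def by (rule F_refl[OF assms(5)]) (use P3 in presburger)
    have "P dvd (F 0 + F 1 + F 2 + F 3) - (F 0 - F 3) * 2"
      using dvd_diff[OF comp dvd_mult2[OF r03[unfolded cong_iff_dvd_diff]]] .
    moreover have "(\<Sum>r<p. (chi (int r) + chi (int r + int p)) * int r ^ t)
           - 4 * (if p mod 4 = 1 then 1 else -1) * Fs (int p) t (\<lambda>r. r mod 4 = int p mod 4)
         = (F 0 + F 1 + F 2 + F 3) - (F 0 - F 3) * 2"
    proof -
      have "Fs (int p) t (\<lambda>r. r mod 4 = int p mod 4) = F 3" using P3 by (simp add: F_def P_def)
      then show ?thesis using X XF p3 by simp
    qed
    ultimately show ?thesis by (simp add: P_def)
  qed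
qed


lemma reidx:
  assumes "\<And>s. s \<in> A \<Longrightarrow> 0 < j s \<and> j s < P \<and> Pr (j s) \<and> i (j s) = s"
      and "\<And>r. 0 < r \<Longrightarrow> r < P \<Longrightarrow> Pr r \<Longrightarrow> i r \<in> A \<and> j (i r) = r"
  shows "(\<Sum>s\<in>A. (j s)^t) = Fs P t Pr"
proof -
  have "Fs P t Pr = (\<Sum>r\<in>{r\<in>{0<..<P}. Pr r}. r^t)"
    unfolding Fs_def by (rule sum.inter_filter[symmetric]) simp
  also have "\<dots> = (\<Sum>s\<in>A. (j s)^t)"
    by (rule sum.reindex_bij_witness[where i = j and j = i]) (use assms in auto)
  finally show ?thesis by simp
qed

lemma reidx_gen:
  fixes m e c P :: int
  assumes m: "m > 0" and e: "e*e = 1" and A: "\<And>s. s \<in> A \<longleftrightarrow> Q (e*(m*s) + c)"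
    and Q: "\<And>r. Q r \<Longrightarrow> 0 < r \<and> r < P"
    and Pr: "\<And>r. Pr r \<longleftrightarrow> Q r \<and> (e*(r - c)) mod m = 0"
  shows "(\<Sum>s\<in>A. (e*(m*s) + c)^t) = Fs P t Pr"
proof (rule reidx[where i = "\<lambda>r. (e*(r - c)) div m"])
  fix s assume s: "s \<in> A"
  hence q: "Q (e*(m*s) + c)" using A by simp
  have "e*((e*(m*s) + c) - c) = m*s" using e by (simp add: algebra_simps)
  then show "0 < e*(m*s) + c \<and> e*(m*s) + c < P \<and> Pr (e*(m*s) + c) \<and> (e*((e*(m*s) + c) - c)) div m = s"
    using q Q[OF q] Pr m by simp
next
  fix r assume r: "0 < r" "r < P" "Pr r"
  hence q: "Q r" and d: "(e*(r - c)) mod m = 0" using Pr by auto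
  define q' where "q' = (e*(r - c)) div m"
  have "e*(r - c) = m * q'" using d unfolding q'_def by (simp add: mult_div_mod_eq[symmetric] mod_eq_0_iff_dvd)
  have "r - c = e*(m*q')"
  proof -
    have "r - c = (e*e)*(r - c)" using e by simp
    also have "\<dots> = e*(e*(r - c))" by (simp add: mult.assoc)
    also have "\<dots> = e*(m*q')" using \<open>e*(r - c) = m * q'\<close> by simp
    finally show ?thesis .
  qed
  hence jr: "e*(m*q') + c = r" by simp
  show "(e*(r - c)) div m \<in> A \<and> e*(m*((e*(r - c)) div m)) + c = r"
    using jr q A unfolding q'_def by simp
qed

lemma shift_pow: "even t \<Longrightarrow> [(- x + k * P)^t = (x::int)^t] (mod P)"
proof -
  assume "even t"
  have "[- x + k * P = - x] (mod P)" by (simp add: cong_iff_dvd_diff)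
  hence "[(- x + k * P)^t = (- x)^t] (mod P)" by (rule cong_pow)
  thus ?thesis using \<open>even t\<close> by simp
qed

lemma shift_pow': "[(x + k * P)^t = (x::int)^t] (mod P)"
proof -
  have "[x + k * P = x] (mod P)" by (simp add: cong_iff_dvd_diff)
  thus ?thesis by (rule cong_pow)
qed

lemma a1: "(-(x::int)) mod 16 = 0 \<longleftrightarrow> x mod 16 = 0" by presburger
lemma a2: "((d::int) + 4) mod 8 = 0 \<longleftrightarrow> d mod 8 = 4" by presburger
lemma a3: "((d::int) + 8) mod 16 = 0 \<longleftrightarrow> d mod 16 = 8" by presburger
lemma a5: "(d::int) mod 8 = 4 \<Longrightarrow> d mod 4 = 0" by presburger
lemma a6: "(d::int) mod 16 = 0 \<or> d mod 16 = 8 \<Longrightarrow> d mod 4 = 0" by presburger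
lemma a7: "(d::int) mod 4 = 0 \<Longrightarrow> \<exists>e. d = 4*e" by presburger
lemma a8: "(4*(e::int)) mod 16 = 0 \<longleftrightarrow> e mod 4 = 0" by presburger
lemma a9: "(4*(e::int)) mod 8 = 4 \<longleftrightarrow> e mod 2 = 1" by presburger
lemma a10: "(4*(e::int)) mod 16 = 8 \<longleftrightarrow> e mod 4 = 2" by presburger
lemma a11: "(e::int) mod 4 = 0 \<or> e mod 4 = 1 \<or> e mod 4 = 2 \<or> e mod 4 = 3" by presburger
lemma a12: "(e::int) mod 4 = 1 \<or> e mod 4 = 3 \<longleftrightarrow> e mod 2 = 1" by presburger

lemma comb_pt:
  fixes r P y :: int
  assumes "odd P"
  shows "(if (-(r - P)) mod 16 = 0 then y else 0) + (if 2*r < P \<and> (r + 3*P) mod 8 = 0 then y else 0)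
       + (if P < 2*r \<and> (r + 3*P) mod 8 = 0 then y else 0) + (if (r + 7*P) mod 16 = 0 then y else 0)
       = (if r mod 4 = P mod 4 then y else 0)"
proof -
  obtain k where P: "P = 2*k+1" using assms oddE by blast
  define d where "d = r - P"
  have e1: "(-(r - P)) mod 16 = 0 \<longleftrightarrow> d mod 16 = 0" unfolding d_def by (rule a1)
  have "r + 3*P = (d + 4) + 8*k" unfolding d_def P by simp
  hence e2: "(r + 3*P) mod 8 = 0 \<longleftrightarrow> d mod 8 = 4" using a2[of d] by simp
  have "r + 7*P = (d + 8) + 16*k" unfolding d_def P by simp
  hence e3: "(r + 7*P) mod 16 = 0 \<longleftrightarrow> d mod 16 = 8" using a3[of d] by simp
  have e4: "r mod 4 = P mod 4 \<longleftrightarrow> d mod 4 = 0" unfolding d_def by (simp add: mod_eq_dvd_iff dvd_eq_mod_eq_0)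
  have ne: "2*r \<noteq> P" using assms by auto
  show ?thesis
  proof (cases "d mod 4 = 0")
    case False
    have "\<not> d mod 16 = 0" "\<not> d mod 8 = 4" "\<not> d mod 16 = 8" using False a5[of d] a6[of d] by auto
    then show ?thesis using False by (simp only: e1 e2 e3 e4) simp
  next
    case True
    then obtain e where de: "d = 4*e" using a7 by blast
    have "e mod 4 = 0 \<or> e mod 4 = 1 \<or> e mod 4 = 2 \<or> e mod 4 = 3" by (rule a11)
    have f: "d mod 16 = 0 \<longleftrightarrow> e mod 4 = 0" "d mod 8 = 4 \<longleftrightarrow> (e mod 4 = 1 \<or> e mod 4 = 3)"
        "d mod 16 = 8 \<longleftrightarrow> e mod 4 = 2" unfolding de using a8[of e] a9[of e] a10[of e] a12[of e] by auto
    have lt: "2*r < P \<or> P < 2*r" using ne by linarith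
    from \<open>e mod 4 = 0 \<or> e mod 4 = 1 \<or> e mod 4 = 2 \<or> e mod 4 = 3\<close> lt
    show ?thesis unfolding e1 e2 e3 e4 f using True by (elim disjE) simp_all
  qed
qed


lemma L8:
  fixes P :: int
  assumes "odd P" "P > 0" "even t"
  shows "[16^t * (\<Sum>s\<in>{s. 0 < s \<and> 16*s < P}. s^t) + 8^t * (\<Sum>s\<in>{s. 3*P < 8*s \<and> 16*s < 7*P}. s^t)
          + 8^t * (\<Sum>s\<in>{s. 7*P < 16*s \<and> 2*s < P}. s^t) + 16^t * (\<Sum>s\<in>{s. 7*P < 16*s \<and> 2*s < P}. s^t)
         = Fs P t (\<lambda>r. r mod 4 = P mod 4)] (mod P)"
proof -
  define A1 where "A1 = {s. 0 < s \<and> 16*s < P}"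
  define A2 where "A2 = {s. 3*P < 8*s \<and> 16*s < 7*P}"
  define A3 where "A3 = {s. 7*P < 16*s \<and> 2*s < P}"
  define B1 where "B1 r = (0 < r \<and> r < P \<and> (-(r - P)) mod 16 = 0)" for r
  define B2 where "B2 r = (0 < r \<and> 2*r < P \<and> (r + 3*P) mod 8 = 0)" for r
  define B3 where "B3 r = (P < 2*r \<and> r < P \<and> (r + 3*P) mod 8 = 0)" for r
  define B4 where "B4 r = (0 < r \<and> r < P \<and> (r + 7*P) mod 16 = 0)" for r
  have e1: "16^t * (\<Sum>s\<in>A1. s^t) = (\<Sum>s\<in>A1. (16*s)^t)" by (simp add: sum_distrib_left power_mult_distrib)
  have e2: "8^t * (\<Sum>s\<in>A2. s^t) = (\<Sum>s\<in>A2. (8*s)^t)" by (simp add: sum_distrib_left power_mult_distrib)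
  have e3: "8^t * (\<Sum>s\<in>A3. s^t) = (\<Sum>s\<in>A3. (8*s)^t)" by (simp add: sum_distrib_left power_mult_distrib)
  have e4: "16^t * (\<Sum>s\<in>A3. s^t) = (\<Sum>s\<in>A3. (16*s)^t)" by (simp add: sum_distrib_left power_mult_distrib)
  have c1: "[(\<Sum>s\<in>A1. (16*s)^t) = Fs P t B1] (mod P)"
  proof -
    have "[(\<Sum>s\<in>A1. (16*s)^t) = (\<Sum>s\<in>A1. (- (16*s) + 1 * P)^t)] (mod P)"
      by (rule cong_sum) (rule cong_sym, rule shift_pow[OF assms(3)])
    also have "(\<Sum>s\<in>A1. (- (16*s) + 1 * P)^t) = (\<Sum>s\<in>A1. ((-1)*(16*s) + P)^t)" by simp
    also have "\<dots> = Fs P t B1"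
      by (rule reidx_gen[where Q = "\<lambda>r. 0 < r \<and> r < P"]) (auto simp: A1_def B1_def)
    finally show ?thesis .
  qed
  have c2: "[(\<Sum>s\<in>A2. (8*s)^t) = Fs P t B2] (mod P)"
  proof -
    have "[(\<Sum>s\<in>A2. (8*s)^t) = (\<Sum>s\<in>A2. (8*s + (-3) * P)^t)] (mod P)"
      by (rule cong_sum) (rule cong_sym, rule shift_pow')
    also have "(\<Sum>s\<in>A2. (8*s + (-3) * P)^t) = (\<Sum>s\<in>A2. (1*(8*s) + (-3*P))^t)" by simp
    also have "\<dots> = Fs P t B2"
      by (rule reidx_gen[where Q = "\<lambda>r. 0 < r \<and> 2*r < P"]) (auto simp: A2_def B2_def)
    finally show ?thesis .
  qed
  have c3: "[(\<Sum>s\<in>A3. (8*s)^t) = Fs P t B3] (mod P)"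
  proof -
    have "[(\<Sum>s\<in>A3. (8*s)^t) = (\<Sum>s\<in>A3. (8*s + (-3) * P)^t)] (mod P)"
      by (rule cong_sum) (rule cong_sym, rule shift_pow')
    also have "(\<Sum>s\<in>A3. (8*s + (-3) * P)^t) = (\<Sum>s\<in>A3. (1*(8*s) + (-3*P))^t)" by simp
    also have "\<dots> = Fs P t B3"
      by (rule reidx_gen[where Q = "\<lambda>r. P < 2*r \<and> r < P"]) (use assms(2) in \<open>auto simp: A3_def B3_def\<close>)
    finally show ?thesis .
  qed
  have c4: "[(\<Sum>s\<in>A3. (16*s)^t) = Fs P t B4] (mod P)"
  proof -
    have "[(\<Sum>s\<in>A3. (16*s)^t) = (\<Sum>s\<in>A3. (16*s + (-7) * P)^t)] (mod P)"
      by (rule cong_sum) (rule cong_sym, rule shift_pow')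
    also have "(\<Sum>s\<in>A3. (16*s + (-7) * P)^t) = (\<Sum>s\<in>A3. (1*(16*s) + (-7*P))^t)" by simp
    also have "\<dots> = Fs P t B4"
      by (rule reidx_gen[where Q = "\<lambda>r. 0 < r \<and> r < P"]) (auto simp: A3_def B4_def)
    finally show ?thesis .
  qed
  have comb: "Fs P t B1 + Fs P t B2 + Fs P t B3 + Fs P t B4 = Fs P t (\<lambda>r. r mod 4 = P mod 4)"
  proof -
    have "(if B1 r then r^t else 0) + (if B2 r then r^t else 0) + (if B3 r then r^t else 0) + (if B4 r then r^t else 0)
       = (if r mod 4 = P mod 4 then r^t else 0)" if "r \<in> {0<..<P}" for r
      using comb_pt[OF assms(1), of r "r^t"] that unfolding B1_def B2_def B3_def B4_def by auto
    then show ?thesis unfolding Fs_def by (simp add: sum.distrib[symmetric])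
  qed
  have "[(\<Sum>s\<in>A1. (16*s)^t) + (\<Sum>s\<in>A2. (8*s)^t) + (\<Sum>s\<in>A3. (8*s)^t) + (\<Sum>s\<in>A3. (16*s)^t)
     = Fs P t B1 + Fs P t B2 + Fs P t B3 + Fs P t B4] (mod P)"
    by (intro cong_add c1 c2 c3 c4)
  then have "[16^t * (\<Sum>s\<in>A1. s^t) + 8^t * (\<Sum>s\<in>A2. s^t) + 8^t * (\<Sum>s\<in>A3. s^t) + 16^t * (\<Sum>s\<in>A3. s^t)
     = Fs P t (\<lambda>r. r mod 4 = P mod 4)] (mod P)" by (simp only: e1 e2 e3 e4 comb)
  then show ?thesis by (simp only: A1_def A2_def A3_def)
qed


lemma lt_frac:
  fixes a b c :: int
  assumes "c > 0"
  shows "(rat_of_int a < rat_of_int b / rat_of_int c * of_nat p) \<longleftrightarrow> c * a < b * int p"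
proof -
  have "rat_of_int a < rat_of_int b / rat_of_int c * of_nat p \<longleftrightarrow> rat_of_int c * rat_of_int a < rat_of_int b * of_nat p"
    using assms by (simp add: field_simps)
  also have "\<dots> \<longleftrightarrow> rat_of_int (c * a) < rat_of_int (b * int p)" by simp
  also have "\<dots> \<longleftrightarrow> c * a < b * int p" by (rule of_int_less_iff)
  finally show ?thesis .
qed

lemma gt_frac:
  fixes a b c :: int
  assumes "c > 0"
  shows "(rat_of_int b / rat_of_int c * of_nat p < rat_of_int a) \<longleftrightarrow> b * int p < c * a"
proof -
  have "rat_of_int b / rat_of_int c * of_nat p < rat_of_int a \<longleftrightarrow> rat_of_int b * of_nat p < rat_of_int c * rat_of_int a"
    using assms by (simp add: field_simps)
  also have "\<dots> \<longleftrightarrow> rat_of_int (b * int p) < rat_of_int (c * a)" by simp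
  also have "\<dots> \<longleftrightarrow> b * int p < c * a" by (rule of_int_less_iff)
  finally show ?thesis .
qed

lemma S_conv:
  assumes "\<And>s::int. (x * of_nat p < of_int s \<and> of_int s < y * of_nat p) \<longleftrightarrow> s \<in> A"
  shows "S_sum p t x y = of_int (\<Sum>s\<in>A. s^t)"
proof -
  have "{s::int. x * of_nat p < of_int s \<and> of_int s < y * of_nat p} = A" using assms by auto
  then show ?thesis unfolding S_sum_def by simp
qed

lemma S1: "S_sum p t 0 (1/16) = of_int (\<Sum>s\<in>{s. 0 < s \<and> 16*s < int p}. s^t)"
proof (rule S_conv)
  fix s :: int
  have "rat_of_int s < rat_of_int 1 / rat_of_int 16 * of_nat p \<longleftrightarrow> 16 * s < 1 * int p" by (rule lt_frac) simp
  then show "(0 * of_nat p < rat_of_int s \<and> rat_of_int s < 1/16 * of_nat p) \<longleftrightarrow> s \<in> {s. 0 < s \<and> 16*s < int p}"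
    by simp
qed

lemma S2: "S_sum p t (3/8) (7/16) = of_int (\<Sum>s\<in>{s. 3 * int p < 8*s \<and> 16*s < 7 * int p}. s^t)"
proof (rule S_conv)
  fix s :: int
  have "rat_of_int s < rat_of_int 7 / rat_of_int 16 * of_nat p \<longleftrightarrow> 16 * s < 7 * int p" by (rule lt_frac) simp
  moreover have "rat_of_int 3 / rat_of_int 8 * of_nat p < rat_of_int s \<longleftrightarrow> 3 * int p < 8 * s" by (rule gt_frac) simp
  ultimately show "(3/8 * of_nat p < rat_of_int s \<and> rat_of_int s < 7/16 * of_nat p) \<longleftrightarrow> s \<in> {s. 3 * int p < 8*s \<and> 16*s < 7 * int p}"
    by simp
qed

lemma S3: "S_sum p t (7/16) (1/2) = of_int (\<Sum>s\<in>{s. 7 * int p < 16*s \<and> 2*s < int p}. s^t)"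
proof (rule S_conv)
  fix s :: int
  have "rat_of_int s < rat_of_int 1 / rat_of_int 2 * of_nat p \<longleftrightarrow> 2 * s < 1 * int p" by (rule lt_frac) simp
  moreover have "rat_of_int 7 / rat_of_int 16 * of_nat p < rat_of_int s \<longleftrightarrow> 7 * int p < 16 * s" by (rule gt_frac) simp
  ultimately show "(7/16 * of_nat p < rat_of_int s \<and> rat_of_int s < 1/2 * of_nat p) \<longleftrightarrow> s \<in> {s. 7 * int p < 16*s \<and> 2*s < int p}"
    by simp
qed

lemma euler_si: "even t \<Longrightarrow> euler_num t = of_int ((-1)^(t div 2) * si t)"
proof -
  assume "even t"
  hence "sech_num t = (-1)^(t div 2) * euler_num t" by (simp add: sech_num_def)
  hence "(-1)^(t div 2) * sech_num t = ((-1)^(t div 2) * (-1)^(t div 2)) * euler_num t" by simp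
  also have "(-1::rat)^(t div 2) * (-1)^(t div 2) = 1" by (simp add: power_add[symmetric])
  finally show ?thesis by (simp add: sech_si)
qed

theorem mainTheorem5:
  fixes p k t :: nat
  assumes "prime p" and "p \<ge> 5" and "1 \<le> k" and "2 * k \<le> p - 3"
    and "t = p - 1 - 2 * k"
  shows "rat_cong ((-1) ^ k * 4 ^ (2 * k - 1) * euler_num t)
           (4 ^ t * S_sum p t 0 (1/16) + 2 ^ t * S_sum p t (3/8) (7/16)
            + (2 ^ t + 4 ^ t) * S_sum p t (7/16) (1/2)) p"
proof -
  define P where "P = int p"
  have odd: "odd p" using assms(1,2) by (intro prime_odd_nat) auto
  have tev: "even t" using odd assms(5) by simp
  have t0: "0 < t" and tlt: "t < p - 1" using assms(2,3,4,5) by auto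
  define S1i where "S1i = (\<Sum>s\<in>{s. 0 < s \<and> 16*s < P}. s^t)"
  define S2i where "S2i = (\<Sum>s\<in>{s. 3 * P < 8*s \<and> 16*s < 7 * P}. s^t)"
  define S3i where "S3i = (\<Sum>s\<in>{s. 7 * P < 16*s \<and> 2*s < P}. s^t)"
  define X where "X = (\<Sum>r<p. (chi (int r) + chi (int r + int p)) * int r ^ t)"
  define c :: int where "c = (if p mod 4 = 1 then 1 else -1)"
  define Q where "Q = Fs P t (\<lambda>r. r mod 4 = P mod 4)"
  define RHSi where "RHSi = 4^t * S1i + 2^t * S2i + (2^t + 4^t) * S3i"
  define LHSi where "LHSi = (-1)^k * 4^(2*k-1) * ((-1)^(t div 2) * si t)"
  have k1: "[si t = X] (mod P)"
  proof -
    have "t + 1 < p" using tlt by simp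
    then have "int p dvd si (t + 1 - 1) - (\<Sum>r<p. (chi (int r) + chi (int r + int p)) * int r ^ (t + 1 - 1))"
      by (intro key_cong[OF assms(1) odd assms(2)]) auto
    then show ?thesis unfolding X_def P_def by (simp add: cong_iff_dvd_diff)
  qed
  have k2: "[X = 4 * c * Q] (mod P)"
    using L7[OF assms(1,2) t0 tlt tev] unfolding X_def c_def Q_def P_def by (simp add: cong_iff_dvd_diff)
  have "[16^t * S1i + 8^t * S2i + 8^t * S3i + 16^t * S3i = Q] (mod P)"
    unfolding S1i_def S2i_def S3i_def Q_def
    by (rule L8) (use odd in \<open>auto simp: P_def\<close>, use assms(1) prime_gt_0_nat in auto, rule tev)
  moreover have "16^t * S1i + 8^t * S2i + 8^t * S3i + 16^t * S3i = 4^t * RHSi"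
  proof -
    have "(16::int)^t = 4^t * 4^t" "(8::int)^t = 4^t * 2^t" by (simp_all add: power_mult_distrib[symmetric])
    then show ?thesis unfolding RHSi_def by (simp add: algebra_simps)
  qed
  ultimately have k3: "[Q = 4^t * RHSi] (mod P)" by (simp add: cong_sym)
  have sgn: "(-1)^k * (-1)^(t div 2) = c"
  proof -
    have "k + t div 2 = (p - 1) div 2" using assms(3,4,5) tev by presburger
    hence "(-1::int)^k * (-1)^(t div 2) = (-1)^((p - 1) div 2)" by (simp add: power_add[symmetric])
    moreover have "even ((p - 1) div 2) \<longleftrightarrow> p mod 4 = 1" using odd by presburger
    ultimately show ?thesis unfolding c_def by auto
  qed
  have LH: "LHSi = c * 4^(2*k-1) * si t" unfolding LHSi_def sgn[symmetric] by (simp add: algebra_simps)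
  have "[LHSi = c * 4^(2*k-1) * (4 * c * (4^t * RHSi))] (mod P)"
    unfolding LH by (intro cong_mult cong_refl cong_trans[OF k1 cong_trans[OF k2]] k3)
  moreover have "c * 4^(2*k-1) * (4 * c * (4^t * RHSi)) = (c * c) * 4^(p-1) * RHSi"
  proof -
    have "2*k - 1 + 1 + t = p - 1" using assms(3,4,5) by simp
    hence "(4::int)^(2*k-1) * 4 * 4^t = 4^(p-1)" by (metis power_add power_one_right)
    then show ?thesis by (simp add: algebra_simps)
  qed
  moreover have "c * c = 1" unfolding c_def by simp
  moreover have "[(4::int)^(p-1) = 1] (mod P)"
  proof -
    have "\<not> p dvd 4"
    proof
      assume "p dvd 4" hence "p \<le> 4" by (rule dvd_imp_le) simp
      with assms(2) show False by simp
    qed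
    hence "[4^(p-1) = 1] (mod p)" using fermat_theorem[OF assms(1)] by simp
    hence "[int (4^(p-1)) = int 1] (mod int p)" by (simp only: cong_int_iff)
    thus ?thesis by (simp add: P_def)
  qed
  ultimately have "[LHSi = RHSi] (mod P)"
    by (metis (no_types, lifting) cong_scalar_right cong_trans mult_1 mult.left_neutral)
  hence dv: "int p dvd LHSi - RHSi" by (simp add: cong_iff_dvd_diff P_def)
  have eqL: "(-1) ^ k * 4 ^ (2 * k - 1) * euler_num t = rat_of_int LHSi"
    unfolding LHSi_def euler_si[OF tev] by simp
  have eqR: "4 ^ t * S_sum p t 0 (1/16) + 2 ^ t * S_sum p t (3/8) (7/16) + (2 ^ t + 4 ^ t) * S_sum p t (7/16) (1/2)
       = rat_of_int RHSi"
    unfolding RHSi_def S1 S2 S3 S1i_def S2i_def S3i_def P_def by simp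
  show ?thesis unfolding rat_cong_def eqL eqR
    using dv by (simp del: of_int_diff add: of_int_diff[symmetric])
qed


end
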